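(* Let $G=(V,E)$ be a graph and let $R$ be $E_{\mathbb{K}}[\mathrm{HSTAB}(G)]$ (resp. $E_{\mathbb{K}}[\mathrm{QSTAB}(G)]$, resp. $E_{\mathbb{K}}[\mathrm{TSTAB}(G)]$). If there are maximal cliques (resp. maximal cliques, resp. maximal elements of $\mathcal K(G)$) $K_1,K_2$ with $\#K_1>\#K_2$, then $\operatorname{tr}(\omega_R)\subseteq R_{\ge \#K_1-\#K_2}=\bigoplus_{n\ge\#K_1-\#K_2}R_n$.
   Context: $\mathrm{HSTAB}(G)$ is the set of $f\in\mathbb{R}^V$ with $0\le f(x)\le 1$ for all $x$, $\sum_{x\in K}f(x)\le1$ for every clique $K$, and $\sum_{x\in C}f(x)\le(\#C-1)/2$ for every odd cycle $C$; $\mathrm{QSTAB}(G)$ uses only the first two conditions; $\mathrm{TSTAB}(G)$ uses the first and third conditions and $\sum_{x\in e}f(x)\le1$ for every edge $e$. $\mathcal K(G)$ is the set of cliques of $G$ of size at most $3$. For a rational polytope $\mathcal P\subset\mathbb{R}^V$, with $V^-=V\cup\{-\infty\}$, $T^f=\prod_{x\in V^-}T_x^{f(x)}$, $\deg T_x=0$ ($x\in V$), $\deg T_{-\infty}=1$, the Ehrhart ring over a field $\mathbb{K}$ is $E_{\mathbb{K}}[\mathcal P]=\mathbb{K}[T^f\mid f\in\mathbb{Z}^{V^-}, f(-\infty)>0, f|_V/f(-\infty)\in\mathcal P]$; it is a normal Cohen–Macaulay graded domain with canonical module $\omega_R$. $\operatorname{tr}(M)=\sum_{\varphi\in\operatorname{Hom}_R(M,R)}\varphi(M)$.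 *)

theory Defs
  imports "HOL-Analysis.Analysis" "HOL-Library.Poly_Mapping"
begin

definition simple_graph :: "('v \<Rightarrow> 'v \<Rightarrow> bool) \<Rightarrow> bool" where
  "simple_graph E \<longleftrightarrow> (\<forall>x y. E x y \<longrightarrow> E y x) \<and> (\<forall>x. \<not> E x x)"

definition is_clique :: "('v \<Rightarrow> 'v \<Rightarrow> bool) \<Rightarrow> 'v set \<Rightarrow> bool" where
  "is_clique E K \<longleftrightarrow> (\<forall>x\<in>K. \<forall>y\<in>K. x \<noteq> y \<longrightarrow> E x y)"

definition is_maximal_clique :: "('v \<Rightarrow> 'v \<Rightarrow> bool) \<Rightarrow> 'v set \<Rightarrow> bool" where
  "is_maximal_clique E K \<longleftrightarrow> is_clique E K \<and> (\<forall>L. is_clique E L \<and> K \<subseteq> L \<longrightarrow> L = K)"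

definition small_cliques :: "('v \<Rightarrow> 'v \<Rightarrow> bool) \<Rightarrow> 'v set set" where
  "small_cliques E = {K. is_clique E K \<and> card K \<le> 3}"

definition is_maximal_small_clique :: "('v \<Rightarrow> 'v \<Rightarrow> bool) \<Rightarrow> 'v set \<Rightarrow> bool" where
  "is_maximal_small_clique E K \<longleftrightarrow>
     K \<in> small_cliques E \<and> (\<forall>L\<in>small_cliques E. K \<subseteq> L \<longrightarrow> L = K)"

definition is_odd_cycle :: "('v \<Rightarrow> 'v \<Rightarrow> bool) \<Rightarrow> 'v set \<Rightarrow> bool" where
  "is_odd_cycle E C \<longleftrightarrow> (\<exists>xs. distinct xs \<and> odd (length xs) \<and> 3 \<le> length xs \<and> set xs = C \<and>
      (\<forall>i<length xs. E (xs ! i) (xs ! ((i + 1) mod length xs))))"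

definition HSTAB :: "('v::finite \<Rightarrow> 'v \<Rightarrow> bool) \<Rightarrow> ('v \<Rightarrow> real) set" where
  "HSTAB E = {f. (\<forall>x. 0 \<le> f x \<and> f x \<le> 1)
     \<and> (\<forall>K. is_clique E K \<longrightarrow> (\<Sum>x\<in>K. f x) \<le> 1)
     \<and> (\<forall>C. is_odd_cycle E C \<longrightarrow> (\<Sum>x\<in>C. f x) \<le> (real (card C) - 1) / 2)}"

definition QSTAB :: "('v::finite \<Rightarrow> 'v \<Rightarrow> bool) \<Rightarrow> ('v \<Rightarrow> real) set" where
  "QSTAB E = {f. (\<forall>x. 0 \<le> f x \<and> f x \<le> 1)
     \<and> (\<forall>K. is_clique E K \<longrightarrow> (\<Sum>x\<in>K. f x) \<le> 1)}"

definition TSTAB :: "('v::finite \<Rightarrow> 'v \<Rightarrow> bool) \<Rightarrow> ('v \<Rightarrow> real) set" where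
  "TSTAB E = {f. (\<forall>x. 0 \<le> f x \<and> f x \<le> 1)
     \<and> (\<forall>x y. E x y \<longrightarrow> f x + f y \<le> 1)
     \<and> (\<forall>C. is_odd_cycle E C \<longrightarrow> (\<Sum>x\<in>C. f x) \<le> (real (card C) - 1) / 2)}"

text \<open>Laurent monomials T^f, f : V^- -> Z, with V^- = 'v option and None playing the role of -infinity.
  The ambient ring is the group algebra of Z^(V^-) over 'k, as a poly_mapping type.\<close>

definition restr_ratio :: "('v option \<Rightarrow>\<^sub>0 int) \<Rightarrow> ('v \<Rightarrow> real)" where
  "restr_ratio f = (\<lambda>x. real_of_int (Poly_Mapping.lookup f (Some x)) / real_of_int (Poly_Mapping.lookup f None))"

definition ehrhart_exps :: "('v \<Rightarrow> real) set \<Rightarrow> ('v option \<Rightarrow>\<^sub>0 int) set" where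
  "ehrhart_exps P = {f. 0 < Poly_Mapping.lookup f None \<and> restr_ratio f \<in> P}"

text \<open>The Ehrhart ring: the K-subalgebra generated by the monomials T^f, f in ehrhart_exps P.
  It is the K-span of the products of generators (including the empty product 1).\<close>
definition ehrhart_ring :: "('v \<Rightarrow> real) set \<Rightarrow> (('v option \<Rightarrow>\<^sub>0 int) \<Rightarrow>\<^sub>0 'k::field) set" where
  "ehrhart_ring P = {p. \<forall>f\<in>Poly_Mapping.keys p. \<exists>gs. set gs \<subseteq> ehrhart_exps P \<and> f = sum_list gs}"

text \<open>Canonical module (Danilov--Stanley description): K-span of the monomials T^f with f in the
  interior of the cone over P, i.e. f(-infinity) > 0 and f|V / f(-infinity) in the interior of P.\<close>
definition ehrhart_canonical :: "('v \<Rightarrow> real) set \<Rightarrow> (('v option \<Rightarrow>\<^sub>0 int) \<Rightarrow>\<^sub>0 'k::field) set" where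
  "ehrhart_canonical P = {p. \<forall>f\<in>Poly_Mapping.keys p. 0 < Poly_Mapping.lookup f None \<and> restr_ratio f \<in> interior P}"

definition module_hom ::
  "('a::comm_ring_1) set \<Rightarrow> 'a set \<Rightarrow> ('a \<Rightarrow> 'a) set" where
  "module_hom R M = {\<phi>. (\<forall>m\<in>M. \<phi> m \<in> R) \<and> (\<forall>a\<in>M. \<forall>b\<in>M. \<phi> (a + b) = \<phi> a + \<phi> b)
                        \<and> (\<forall>r\<in>R. \<forall>m\<in>M. \<phi> (r * m) = r * \<phi> m)}"

definition module_trace :: "('a::comm_ring_1) set \<Rightarrow> 'a set \<Rightarrow> 'a set" where
  "module_trace R M = {(\<Sum>i<n. \<phi> i (m i)) | (n::nat) \<phi> m. \<forall>i<n. \<phi> i \<in> module_hom R M \<and> m i \<in> M}"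

definition degree_ge :: "(('v option \<Rightarrow>\<^sub>0 int) \<Rightarrow>\<^sub>0 'k::field) set \<Rightarrow> int \<Rightarrow> (('v option \<Rightarrow>\<^sub>0 int) \<Rightarrow>\<^sub>0 'k) set" where
  "degree_ge R d = {p\<in>R. \<forall>f\<in>Poly_Mapping.keys p. d \<le> Poly_Mapping.lookup f None}"

end

theory Submission
  imports Defs
begin

abbreviation lk where "lk \<equiv> Poly_Mapping.lookup"

lemma interior_ray:
  fixes f h :: "'v \<Rightarrow> real"
  assumes "f \<in> interior S"
  shows "\<exists>t>0. (\<lambda>x. f x + t * h x) \<in> S"
proof -
  define g where "g = (\<lambda>t::real. \<lambda>x. f x + t * h x)"
  have cont: "continuous_on UNIV g" unfolding g_def
    by (intro continuous_on_coordinatewise_then_product continuous_intros)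
  have op: "open (g -` interior S)"
    using continuous_on_open_vimage[OF open_UNIV] cont by auto
  have "0 \<in> g -` interior S" using assms by (simp add: g_def)
  then obtain e where e: "e > 0" "ball 0 e \<subseteq> g -` interior S"
    using op openE by blast
  have "e/2 \<in> ball 0 e" using e by auto
  then have "g (e/2) \<in> S" using e interior_subset by blast
  then show ?thesis using e by (intro exI[of _ "e/2"]) (auto simp: g_def)
qed

lemma cone_prop:
  assumes nonneg: "\<And>f x. f \<in> P \<Longrightarrow> 0 \<le> f x"
    and k2: "\<And>f. f \<in> P \<Longrightarrow> (\<Sum>x\<in>K2. f x) \<le> 1"
    and "set gs \<subseteq> ehrhart_exps P"
  shows "(\<forall>x. 0 \<le> lk (sum_list gs) (Some x)) \<and> (\<Sum>x\<in>K2. lk (sum_list gs) (Some x)) \<le> lk (sum_list gs) None"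
  using assms(3)
proof (induction gs)
  case Nil
  then show ?case by simp
next
  case (Cons f gs)
  have f: "0 < lk f None" "restr_ratio f \<in> P" using Cons.prems by (auto simp: ehrhart_exps_def)
  have a: "0 \<le> lk f (Some x)" for x
  proof -
    have "0 \<le> real_of_int (lk f (Some x)) / real_of_int (lk f None)"
      using nonneg[OF f(2), of x] by (simp add: restr_ratio_def)
    with f(1) show ?thesis by (simp add: zero_le_divide_iff)
  qed
  have "(\<Sum>x\<in>K2. real_of_int (lk f (Some x)) / real_of_int (lk f None)) \<le> 1"
    using k2[OF f(2)] by (simp add: restr_ratio_def)
  then have "(\<Sum>x\<in>K2. real_of_int (lk f (Some x))) / real_of_int (lk f None) \<le> 1"
    by (simp add: sum_divide_distrib)
  then have "(\<Sum>x\<in>K2. real_of_int (lk f (Some x))) \<le> real_of_int (lk f None)"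
    using f(1) by (simp add: divide_le_eq)
  then have "real_of_int (\<Sum>x\<in>K2. lk f (Some x)) \<le> real_of_int (lk f None)"
    by (simp only: of_int_sum)
  then have b: "(\<Sum>x\<in>K2. lk f (Some x)) \<le> lk f None"
    by (simp only: of_int_le_iff)
  from Cons have IH: "(\<forall>x. 0 \<le> lk (sum_list gs) (Some x)) \<and> (\<Sum>x\<in>K2. lk (sum_list gs) (Some x)) \<le> lk (sum_list gs) None"
    by auto
  show ?case using a b IH by (simp add: lookup_add sum.distrib add_mono)
qed

lemma interior_prop:
  fixes a :: "'v option \<Rightarrow>\<^sub>0 int"
  assumes nonneg: "\<And>f x. f \<in> P \<Longrightarrow> 0 \<le> f x"
    and k1: "\<And>f. f \<in> P \<Longrightarrow> (\<Sum>x\<in>K1. f x) \<le> 1"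
    and fin: "finite K1"
    and a: "0 < lk a None" "restr_ratio a \<in> interior P"
  shows "(\<forall>x. 0 < lk a (Some x)) \<and> (\<Sum>x\<in>K1. lk a (Some x)) < lk a None"
proof -
  let ?f = "restr_ratio a"
  have pos: "0 < lk a (Some x)" for x
  proof -
    obtain t where t: "t > 0" "(\<lambda>y. ?f y + t * (if y = x then -1 else 0)) \<in> P"
      using interior_ray[OF a(2), of "\<lambda>y. if y = x then -1 else 0"] by blast
    have "0 \<le> ?f x - t" using nonneg[OF t(2), of x] by simp
    then have "0 < ?f x" using t by simp
    then show ?thesis using a(1) by (simp add: restr_ratio_def zero_less_divide_iff)
  qed
  have "K1 \<noteq> {} \<or> K1 = {}" by simp
  have lt: "(\<Sum>x\<in>K1. ?f x) < 1"
  proof (cases "K1 = {}")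
    case True then show ?thesis by simp
  next
    case False
    obtain t where t: "t > 0" "(\<lambda>y. ?f y + t * 1) \<in> P"
      using interior_ray[OF a(2), of "\<lambda>_. 1"] by blast
    have "(\<Sum>x\<in>K1. ?f x + t) \<le> 1" using k1[OF t(2)] by simp
    moreover have "(\<Sum>x\<in>K1. ?f x + t) = (\<Sum>x\<in>K1. ?f x) + t * card K1"
      by (simp add: sum.distrib)
    moreover have "card K1 > 0" using False fin by auto
    then have "t * real (card K1) > 0" using t(1) by simp
    ultimately show ?thesis by linarith
  qed
  have "(\<Sum>x\<in>K1. ?f x) = (\<Sum>x\<in>K1. real_of_int (lk a (Some x))) / real_of_int (lk a None)"
    by (simp add: restr_ratio_def sum_divide_distrib)
  moreover have a0: "0 < real_of_int (lk a None)" using a(1) by simp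
  ultimately have "(\<Sum>x\<in>K1. real_of_int (lk a (Some x))) < real_of_int (lk a None)"
    using lt by (simp add: pos_divide_less_eq)
  then have "real_of_int (\<Sum>x\<in>K1. lk a (Some x)) < real_of_int (lk a None)"
    by (simp only: of_int_sum)
  then have "(\<Sum>x\<in>K1. lk a (Some x)) < lk a None"
    by (simp only: of_int_less_iff)
  with pos show ?thesis by blast
qed

abbreviation T :: "('v option \<Rightarrow>\<^sub>0 int) \<Rightarrow> (('v option \<Rightarrow>\<^sub>0 int) \<Rightarrow>\<^sub>0 'k::field)"
  where "T e \<equiv> Poly_Mapping.single e 1"

lemma shift_keys:
  fixes h :: "('v option \<Rightarrow>\<^sub>0 int) \<Rightarrow>\<^sub>0 'k::field"
  assumes "g \<in> Poly_Mapping.keys h"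
  shows "c + g \<in> Poly_Mapping.keys (T c * h)"
proof -
  have "h = T (-c) * (T c * h)"
    by (simp add: mult.assoc[symmetric] mult_single)
  then have "g \<in> Poly_Mapping.keys (T (-c) * (T c * h))" using assms by simp
  then obtain k where "k \<in> Poly_Mapping.keys (T c * h)" "g = -c + k"
    using keys_mult[of "T (-c)" "T c * h"] by auto
  then show ?thesis by (simp add: add.assoc[symmetric])
qed

lemma canon_sub_ring: "ehrhart_canonical P \<subseteq> ehrhart_ring P"
  unfolding ehrhart_canonical_def ehrhart_ring_def ehrhart_exps_def
  apply clarsimp
  subgoal for p f by (rule exI[of _ "[f]"]) (auto dest: interior_subset[THEN subsetD])
  done

lemma T_canon: "0 < lk c None \<Longrightarrow> restr_ratio c \<in> interior P \<Longrightarrow> T c \<in> ehrhart_canonical P"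
  unfolding ehrhart_canonical_def by simp

lemma degree_ge_add: "p \<in> degree_ge R d \<Longrightarrow> q \<in> degree_ge R d \<Longrightarrow> (\<And>p q. p \<in> R \<Longrightarrow> q \<in> R \<Longrightarrow> p + q \<in> R)
  \<Longrightarrow> p + q \<in> degree_ge R d"
proof -
  assume p: "p \<in> degree_ge R d" and q: "q \<in> degree_ge R d" and cl: "\<And>p q. p \<in> R \<Longrightarrow> q \<in> R \<Longrightarrow> p + q \<in> R"
  have "p + q \<in> R" using p q cl unfolding degree_ge_def by blast
  moreover have "d \<le> Poly_Mapping.lookup f None" if "f \<in> Poly_Mapping.keys (p + q)" for f
  proof -
    have "f \<in> Poly_Mapping.keys p \<union> Poly_Mapping.keys q" using that keys_add[of p q] by blast
    then show ?thesis using p q unfolding degree_ge_def by blast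
  qed
  ultimately show ?thesis unfolding degree_ge_def by blast
qed

lemma ring_add: "p \<in> ehrhart_ring P \<Longrightarrow> q \<in> ehrhart_ring P \<Longrightarrow> p + q \<in> ehrhart_ring P"
proof -
  assume p: "p \<in> ehrhart_ring P" and q: "q \<in> ehrhart_ring P"
  show ?thesis unfolding ehrhart_ring_def
  proof (intro CollectI ballI)
    fix f assume "f \<in> Poly_Mapping.keys (p + q)"
    then have "f \<in> Poly_Mapping.keys p \<union> Poly_Mapping.keys q" using keys_add[of p q] by blast
    then show "\<exists>gs. set gs \<subseteq> ehrhart_exps P \<and> f = sum_list gs" using p q unfolding ehrhart_ring_def by blast
  qed
qed

lemma ring_zero: "0 \<in> ehrhart_ring P" unfolding ehrhart_ring_def by simp

lemma core:
  fixes P :: "('v::finite \<Rightarrow> real) set" and K1 K2 :: "'v set"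
  assumes nonneg: "\<And>f x. f \<in> P \<Longrightarrow> 0 \<le> f x"
    and k2: "\<And>f. f \<in> P \<Longrightarrow> (\<Sum>x\<in>K2. f x) \<le> 1"
    and k1: "\<And>f. f \<in> P \<Longrightarrow> (\<Sum>x\<in>K1. f x) \<le> 1"
    and ca: "0 < lk ca None" "restr_ratio ca \<in> interior P" "\<And>x. x \<in> K2 \<Longrightarrow> lk ca (Some x) = 1"
    and cb: "0 < lk cb None" "restr_ratio cb \<in> interior P"
            "(\<Sum>x\<in>K2. lk cb (Some x)) = lk cb None - 1"
  shows "module_trace (ehrhart_ring P :: (('v option \<Rightarrow>\<^sub>0 int) \<Rightarrow>\<^sub>0 'k::field) set) (ehrhart_canonical P)
     \<subseteq> degree_ge (ehrhart_ring P) (int (card K1) - int (card K2))"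
proof -
  let ?R = "ehrhart_ring P :: (('v option \<Rightarrow>\<^sub>0 int) \<Rightarrow>\<^sub>0 'k) set"
  let ?W = "ehrhart_canonical P :: (('v option \<Rightarrow>\<^sub>0 int) \<Rightarrow>\<^sub>0 'k) set"
  let ?d = "int (card K1) - int (card K2)"
  have WR: "?W \<subseteq> ?R" by (rule canon_sub_ring)
  have coneR: "(\<forall>x. 0 \<le> lk z (Some x)) \<and> (\<Sum>x\<in>K2. lk z (Some x)) \<le> lk z None"
    if pz: "p \<in> ?R" "z \<in> Poly_Mapping.keys p" for p z
  proof -
    obtain gs where "set gs \<subseteq> ehrhart_exps P" "z = sum_list gs"
      using pz unfolding ehrhart_ring_def by blast
    moreover have "(\<forall>x. 0 \<le> lk (sum_list gs) (Some x)) \<and> (\<Sum>x\<in>K2. lk (sum_list gs) (Some x)) \<le> lk (sum_list gs) None"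
      by (rule cone_prop[of P K2 gs]) (use nonneg k2 \<open>set gs \<subseteq> ehrhart_exps P\<close> in auto)
    ultimately show ?thesis by simp
  qed
  have main: "\<phi> m \<in> degree_ge ?R ?d" if phi: "\<phi> \<in> Defs.module_hom ?R ?W" and m: "m \<in> ?W" for \<phi> m
  proof -
    have B1: "T ca \<in> ?W" and B2: "T cb \<in> ?W" using ca cb T_canon by auto
    define h where "h = T (-cb) * \<phi> (T cb)"
    have hom: "\<phi> (r * w) = r * \<phi> w" if "r \<in> ?R" "w \<in> ?W" for r w
      using phi that unfolding Defs.module_hom_def by blast
    have phiR: "\<phi> w \<in> ?R" if "w \<in> ?W" for w using phi that unfolding Defs.module_hom_def by blast
    have eq: "\<phi> w = w * h" if w: "w \<in> ?W" for w
    proof -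
      have "T cb * \<phi> w = \<phi> (T cb * w)" using hom[OF _ w] B2 WR by auto
      also have "\<dots> = \<phi> (w * T cb)" by (simp add: mult.commute)
      also have "\<dots> = w * \<phi> (T cb)" using hom[OF _ B2] w WR by auto
      finally have "T (-cb) * (T cb * \<phi> w) = T (-cb) * (w * \<phi> (T cb))" by simp
      then show ?thesis unfolding h_def
        by (simp add: mult.assoc[symmetric] mult_single)
    qed
    have gprop: "(\<forall>x\<in>K2. -1 \<le> lk g (Some x)) \<and> (\<Sum>x\<in>K2. lk g (Some x)) \<le> lk g None + 1"
      if g: "g \<in> Poly_Mapping.keys h" for g
    proof -
      have "ca + g \<in> Poly_Mapping.keys (T ca * h)" by (rule shift_keys[OF g])
      moreover have "T ca * h = \<phi> (T ca)" using eq[OF B1] by simp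
      ultimately have "\<forall>x. 0 \<le> lk (ca + g) (Some x)" using coneR phiR[OF B1] by metis
      then have A: "\<forall>x\<in>K2. -1 \<le> lk g (Some x)" using ca(3) by (auto simp: lookup_add) (smt (verit))
      have "cb + g \<in> Poly_Mapping.keys (T cb * h)" by (rule shift_keys[OF g])
      moreover have "T cb * h = \<phi> (T cb)" using eq[OF B2] by simp
      ultimately have "(\<Sum>x\<in>K2. lk (cb + g) (Some x)) \<le> lk (cb + g) None" using coneR phiR[OF B2] by metis
      then have "(\<Sum>x\<in>K2. lk cb (Some x)) + (\<Sum>x\<in>K2. lk g (Some x)) \<le> lk cb None + lk g None"
        by (simp add: lookup_add sum.distrib)
      then have "(\<Sum>x\<in>K2. lk g (Some x)) \<le> lk g None + 1" using cb(3) by simp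
      with A show ?thesis by blast
    qed
    have "\<phi> m \<in> ?R" using phiR[OF m] .
    moreover have "?d \<le> lk e None" if e: "e \<in> Poly_Mapping.keys (\<phi> m)" for e
    proof -
      have "e \<in> Poly_Mapping.keys (m * h)" using e eq[OF m] by simp
      then obtain a g where ag: "a \<in> Poly_Mapping.keys m" "g \<in> Poly_Mapping.keys h" "e = a + g"
        using keys_mult by blast
      have a: "0 < lk a None" "restr_ratio a \<in> interior P" using ag(1) m unfolding ehrhart_canonical_def by auto
      have ai: "(\<forall>x. 0 < lk a (Some x)) \<and> (\<Sum>x\<in>K1. lk a (Some x)) < lk a None"
        by (rule interior_prop[of P K1 a]) (use nonneg k1 a in auto)
      have "int (card K1) = (\<Sum>x\<in>K1. 1)" by simp
      also have "\<dots> \<le> (\<Sum>x\<in>K1. lk a (Some x))" using ai by (intro sum_mono) (simp add: int_one_le_iff_zero_less)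
      finally have A: "int (card K1) + 1 \<le> lk a None" using ai by simp
      have gp: "(\<forall>x\<in>K2. -1 \<le> lk g (Some x)) \<and> (\<Sum>x\<in>K2. lk g (Some x)) \<le> lk g None + 1"
        using gprop[OF ag(2)] .
      have "- int (card K2) = (\<Sum>x\<in>K2. -1)" by simp
      also have "\<dots> \<le> (\<Sum>x\<in>K2. lk g (Some x))" using gp by (intro sum_mono) simp
      finally have "- int (card K2) - 1 \<le> lk g None" using gp by simp
      with A show ?thesis using ag(3) by (simp add: lookup_add)
    qed
    ultimately show ?thesis unfolding degree_ge_def by blast
  qed
  show ?thesis
  proof
    fix p assume "p \<in> module_trace ?R ?W"
    then obtain n :: nat and \<phi> m where p: "p = (\<Sum>i<n. \<phi> i (m i))" and hm: "\<forall>i<n. \<phi> i \<in> Defs.module_hom ?R ?W \<and> m i \<in> ?W"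
      unfolding module_trace_def by auto
    have "(\<Sum>i<k. \<phi> i (m i)) \<in> degree_ge ?R ?d" if "k \<le> n" for k
      using that
    proof (induction k)
      case 0 then show ?case using ring_zero by (simp add: degree_ge_def)
    next
      case (Suc k)
      then have "(\<Sum>i<k. \<phi> i (m i)) \<in> degree_ge ?R ?d" "\<phi> k (m k) \<in> degree_ge ?R ?d"
        using main hm by auto
      then show ?case by (simp add: degree_ge_add ring_add)
    qed
    then show "p \<in> degree_ge ?R ?d" using p by simp
  qed
qed

lemma open_strict:
  fixes A :: "'v::finite set set" and b :: "'v set \<Rightarrow> real"
  shows "open {f::'v \<Rightarrow> real. \<forall>K\<in>A. (\<Sum>x\<in>K. f x) < b K}"
proof -
  have "{f::'v \<Rightarrow> real. \<forall>K\<in>A. (\<Sum>x\<in>K. f x) < b K} = (\<Inter>K\<in>A. {f. (\<Sum>x\<in>K. f x) < b K})" by auto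
  moreover have "open (\<Inter>K\<in>A. {f::'v \<Rightarrow> real. (\<Sum>x\<in>K. f x) < b K})"
  proof (rule open_INT)
    show "finite A" by simp
    show "\<forall>K\<in>A. open {f::'v \<Rightarrow> real. (\<Sum>x\<in>K. f x) < b K}"
    proof
      fix K
      have "continuous_on UNIV (\<lambda>f::'v \<Rightarrow> real. \<Sum>x\<in>K. f x)"
        by (intro continuous_on_sum) simp
      then show "open {f::'v \<Rightarrow> real. (\<Sum>x\<in>K. f x) < b K}"
        by (intro open_Collect_less) (auto intro: continuous_on_const)
    qed
  qed
  ultimately show ?thesis by simp
qed

lemma open_strict_gt:
  fixes A :: "'v::finite set set" and b :: "'v set \<Rightarrow> real"
  shows "open {f::'v \<Rightarrow> real. \<forall>K\<in>A. b K < (\<Sum>x\<in>K. f x)}"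
proof -
  have "{f::'v \<Rightarrow> real. \<forall>K\<in>A. b K < (\<Sum>x\<in>K. f x)} = (\<Inter>K\<in>A. {f. b K < (\<Sum>x\<in>K. f x)})" by auto
  moreover have "open (\<Inter>K\<in>A. {f::'v \<Rightarrow> real. b K < (\<Sum>x\<in>K. f x)})"
  proof (rule open_INT)
    show "finite A" by simp
    show "\<forall>K\<in>A. open {f::'v \<Rightarrow> real. b K < (\<Sum>x\<in>K. f x)}"
    proof
      fix K
      have "continuous_on UNIV (\<lambda>f::'v \<Rightarrow> real. \<Sum>x\<in>K. f x)"
        by (intro continuous_on_sum) simp
      then show "open {f::'v \<Rightarrow> real. b K < (\<Sum>x\<in>K. f x)}"
        by (intro open_Collect_less) (auto intro: continuous_on_const)
    qed
  qed
  ultimately show ?thesis by simp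
qed

lemma interior_by_strict:
  fixes f :: "'v::finite \<Rightarrow> real"
  assumes "\<forall>x. 0 < f x \<and> f x < 1" "\<forall>K\<in>A. (\<Sum>x\<in>K. f x) < 1" "\<forall>C\<in>B. (\<Sum>x\<in>C. f x) < \<beta> C"
    and sub: "\<And>g. (\<forall>x. 0 \<le> g x \<and> g x \<le> 1) \<Longrightarrow> (\<forall>K\<in>A. (\<Sum>x\<in>K. g x) \<le> 1)
        \<Longrightarrow> (\<forall>C\<in>B. (\<Sum>x\<in>C. g x) \<le> \<beta> C) \<Longrightarrow> g \<in> P"
  shows "f \<in> interior P"
proof -
  let ?U1 = "{f::'v \<Rightarrow> real. \<forall>K\<in>(\<lambda>x. {x}) ` UNIV. (\<Sum>x\<in>K. f x) < (\<lambda>_. 1) K}"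
  let ?U0 = "{f::'v \<Rightarrow> real. \<forall>K\<in>(\<lambda>x. {x}) ` UNIV. (\<lambda>_. 0) K < (\<Sum>x\<in>K. f x)}"
  let ?U2 = "{f::'v \<Rightarrow> real. \<forall>K\<in>A. (\<Sum>x\<in>K. f x) < (\<lambda>_. 1) K}"
  let ?U3 = "{f::'v \<Rightarrow> real. \<forall>C\<in>B. (\<Sum>x\<in>C. f x) < \<beta> C}"
  have o0: "open ?U0" by (rule open_strict_gt)
  have o1: "open ?U1" by (rule open_strict)
  have o2: "open ?U2" by (rule open_strict)
  have o3: "open ?U3" by (rule open_strict)
  have "open (?U0 \<inter> ?U1 \<inter> ?U2 \<inter> ?U3)"
    using o0 o1 o2 o3 by (intro open_Int)
  moreover have "f \<in> ?U0 \<inter> ?U1 \<inter> ?U2 \<inter> ?U3" using assms(1-3) by auto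
  moreover have "?U0 \<inter> ?U1 \<inter> ?U2 \<inter> ?U3 \<subseteq> P"
  proof
    fix g assume "g \<in> ?U0 \<inter> ?U1 \<inter> ?U2 \<inter> ?U3"
    then show "g \<in> P" by (intro sub) (auto intro: less_imp_le)
  qed
  ultimately show ?thesis by (rule interiorI)
qed

lemma odd_cycle_props:
  assumes "is_odd_cycle E C"
  shows "finite C \<and> odd (card C) \<and> 3 \<le> card C"
proof -
  obtain xs where "distinct xs" "odd (length xs)" "3 \<le> length xs" "set xs = C"
    using assms unfolding is_odd_cycle_def by blast
  then show ?thesis using distinct_card by fastforce
qed

lemma odd_cycle3_clique:
  assumes sg: "simple_graph E" and "is_odd_cycle E C" and "card C = 3"
  shows "is_clique E C"
proof -
  obtain xs where xs: "distinct xs" "set xs = C" "\<forall>i<length xs. E (xs ! i) (xs ! ((i + 1) mod length xs))"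
    using assms(2) unfolding is_odd_cycle_def by blast
  have l: "length xs = 3" using xs assms(3) distinct_card by fastforce
  then have "\<exists>a b c. xs = [a,b,c]" by (auto simp: numeral_3_eq_3 length_Suc_conv)
  then obtain a b c where abc: "xs = [a,b,c]" by blast
  have "E a b" using xs(3)[rule_format, of 0] unfolding abc by simp
  moreover have "E b c" using xs(3)[rule_format, of 1] unfolding abc by simp
  moreover have "E c a" using xs(3)[rule_format, of 2] unfolding abc by simp
  ultimately have "E a b" "E b c" "E c a" by blast+
  then have "E b a" "E c b" "E a c" using sg unfolding simple_graph_def by auto
  then show ?thesis using \<open>E a b\<close> \<open>E b c\<close> \<open>E c a\<close> xs(2) unfolding is_clique_def abc by auto
qed

lemma tstab_small:
  assumes sg: "simple_graph E" and f: "f \<in> TSTAB E" and K: "is_clique E K" "card K \<le> 3"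
  shows "(\<Sum>x\<in>K. f x) \<le> 1"
proof -
  have f1: "\<forall>x. 0 \<le> f x \<and> f x \<le> 1" and f2: "\<forall>x y. E x y \<longrightarrow> f x + f y \<le> 1"
    and f3: "\<forall>C. is_odd_cycle E C \<longrightarrow> (\<Sum>x\<in>C. f x) \<le> (real (card C) - 1) / 2"
    using f unfolding TSTAB_def by auto
  have fin: "finite K" by simp
  have "card K = 0 \<or> card K = 1 \<or> card K = 2 \<or> card K = 3" using K(2) by linarith
  then show ?thesis
  proof (elim disjE)
    assume "card K = 0" then have "K = {}" using fin by simp
    then show ?thesis by simp
  next
    assume "card K = 1" then obtain x where "K = {x}" by (meson card_1_singletonE)
    then show ?thesis using f1 by simp
  next
    assume "card K = 2" then obtain x y where "K = {x,y}" "x \<noteq> y" by (meson card_2_iff)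
    moreover then have "E x y" using K(1) unfolding is_clique_def by auto
    ultimately show ?thesis using f2 by simp
  next
    assume "card K = 3" then obtain x y z where xyz: "K = {x,y,z}" "x \<noteq> y" "y \<noteq> z" "x \<noteq> z"
      by (meson card_3_iff)
    have "E x y" "E y z" "E z x" using K(1) xyz unfolding is_clique_def by auto
    have cyc: "\<forall>i<length [x,y,z]. E ([x,y,z] ! i) ([x,y,z] ! ((i + 1) mod length [x,y,z]))"
    proof (intro allI impI)
      fix i assume "i < length [x,y,z]"
      then have "i = 0 \<or> i = 1 \<or> i = 2" by auto
      then show "E ([x,y,z] ! i) ([x,y,z] ! ((i + 1) mod length [x,y,z]))"
        using \<open>E x y\<close> \<open>E y z\<close> \<open>E z x\<close> by (elim disjE) simp_all
    qed
    have "distinct [x,y,z]" "odd (length [x,y,z])" "3 \<le> length [x,y,z]" "set [x,y,z] = K"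
      using xyz by simp_all
    then have "is_odd_cycle E K" unfolding is_odd_cycle_def using cyc by blast
    then have "(\<Sum>x\<in>K. f x) \<le> (real (card K) - 1) / 2" using f3 by blast
    then show ?thesis using \<open>card K = 3\<close> by simp
  qed
qed

lemma max_clique_ne: "is_maximal_clique E K \<Longrightarrow> K \<noteq> {}"
proof
  assume "is_maximal_clique E K" "K = {}"
  moreover have "is_clique E {undefined}" by (simp add: is_clique_def)
  ultimately show False unfolding is_maximal_clique_def by blast
qed

lemma max_small_clique_ne: "is_maximal_small_clique E K \<Longrightarrow> K \<noteq> {}"
proof
  assume "is_maximal_small_clique E K" "K = {}"
  moreover have "{undefined} \<in> small_cliques E" by (simp add: is_clique_def small_cliques_def)
  ultimately show False unfolding is_maximal_small_clique_def by blast
qed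

lemma sum_split_c2:
  fixes C D :: "'v::finite set" and M :: int
  shows "(\<Sum>x\<in>C. if x \<in> D then M else 1) = M * int (card (C \<inter> D)) + int (card (C - D))"
proof -
  have "(\<Sum>x\<in>C. if x \<in> D then M else 1) = (\<Sum>x\<in>C \<inter> D. if x \<in> D then M else 1) + (\<Sum>x\<in>C - D. if x \<in> D then M else 1)"
    using sum.Int_Diff[of C "\<lambda>x. if x \<in> D then M else 1" D] by simp
  also have "\<dots> = M * int (card (C \<inter> D)) + int (card (C - D))" by simp
  finally show ?thesis .
qed

lemma c2_clique_bound:
  fixes K K2 :: "'v::finite set"
  assumes "K2 \<subseteq> K \<Longrightarrow> K = K2" "K2 \<noteq> {}"
  shows "(\<Sum>x\<in>K. if x \<in> K2 then int CARD('v) else 1) \<le> int CARD('v) * int (card K2)"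
proof (cases "K2 \<subseteq> K")
  case True then show ?thesis using assms sum_split_c2[where C=K and D=K2 and M="int CARD('v)"] by simp
next
  case False
  then obtain y where y: "y \<in> K2" "y \<notin> K" by auto
  have "K \<inter> K2 \<subseteq> K2 - {y}" using y by auto
  then have "card (K \<inter> K2) \<le> card K2 - 1" using card_mono[of "K2 - {y}"] y by simp
  moreover have "card (K - K2) \<le> CARD('v)" by (rule card_mono) auto
  moreover have "card K2 \<ge> 1" using assms(2) by (simp add: Suc_le_eq card_gt_0_iff)
  ultimately have "int CARD('v) * int (card (K \<inter> K2)) \<le> int CARD('v) * (int (card K2) - 1)"
    "int (card (K - K2)) \<le> int CARD('v)"
    by (auto intro!: mult_left_mono)
  then show ?thesis using sum_split_c2[where C=K and D=K2 and M="int CARD('v)"] by (simp add: algebra_simps)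
qed

lemma c2_cycle_bound:
  fixes C K2 :: "'v::finite set"
  assumes C: "is_odd_cycle E C" and m: "card C = 3 \<Longrightarrow> K2 \<subseteq> C \<Longrightarrow> C = K2" and ne: "K2 \<noteq> {}"
  shows "2 * (\<Sum>x\<in>C. if x \<in> K2 then int CARD('v) else 1) < (int (card C) - 1) * (int CARD('v) * int (card K2) + 1)"
proof -
  define M where "M = int CARD('v)"
  define c where "c = int (card C)"
  define k where "k = int (card K2)"
  define j where "j = int (card (C \<inter> K2))"
  define r where "r = int (card (C - K2))"
  have cp: "finite C" "odd (card C)" "3 \<le> card C" using odd_cycle_props[OF C] by auto
  have Mc: "c \<le> M" unfolding c_def M_def by (simp add: card_mono)
  have k1: "1 \<le> k" using ne unfolding k_def by (simp add: Suc_le_eq card_gt_0_iff)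
  have jk: "j \<le> k" unfolding j_def k_def by (simp add: card_mono)
  have rc: "r \<le> c" unfolding r_def c_def by (simp add: card_mono cp)
  have c3: "3 \<le> c" using cp unfolding c_def by simp
  have S: "(\<Sum>x\<in>C. if x \<in> K2 then int CARD('v) else 1) = M * j + r"
    using sum_split_c2[where C=C and D=K2 and M=M] unfolding M_def j_def r_def by simp
  show ?thesis
  proof (cases "card C = 3 \<and> K2 \<subseteq> C")
    case True
    then have "C = K2" using m by blast
    then have "j = 3" "k = 3" "r = 0" "c = 3" using True unfolding j_def k_def r_def c_def by auto
    then show ?thesis using S unfolding M_def[symmetric] c_def[symmetric] k_def[symmetric] by simp
  next
    case False
    have B: "2 * j + 2 \<le> (c - 1) * k"
    proof (cases "card C = 3")
      case True
      then have "\<not> K2 \<subseteq> C" using False by blast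
      then have "C \<inter> K2 \<subset> K2" by auto
      then have "card (C \<inter> K2) < card K2" by (simp add: psubset_card_mono)
      then have "j + 1 \<le> k" unfolding j_def k_def by simp
      then show ?thesis using True unfolding c_def by simp
    next
      case False
      then have "card C \<noteq> 4" "card C \<noteq> 3" using cp by auto
      then have "5 \<le> c" using c3 unfolding c_def by simp
      then have "4 * k \<le> (c - 1) * k" using k1 by (intro mult_right_mono) auto
      then show ?thesis using jk k1 by linarith
    qed
    have "M * (2 * j + 2) \<le> M * ((c - 1) * k)" using B Mc c3 by (intro mult_left_mono) auto
    then have "2 * (M * j + r) < (c - 1) * (M * k + 1)" using rc Mc c3
      by (simp add: algebra_simps)
    then show ?thesis using S unfolding M_def[symmetric] c_def[symmetric] k_def[symmetric] by simp
  qed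
qed

definition c1e :: "('v::finite) option \<Rightarrow>\<^sub>0 int" where
  "c1e = Abs_poly_mapping (\<lambda>ov. case ov of None \<Rightarrow> int CARD('v) + 1 | Some x \<Rightarrow> 1)"

definition c2e :: "'v::finite set \<Rightarrow> ('v option \<Rightarrow>\<^sub>0 int)" where
  "c2e K2 = Abs_poly_mapping (\<lambda>ov. case ov of None \<Rightarrow> int CARD('v) * int (card K2) + 1
                                       | Some x \<Rightarrow> if x \<in> K2 then int CARD('v) else 1)"

lemma lk_c1e: "Poly_Mapping.lookup (c1e :: ('v::finite) option \<Rightarrow>\<^sub>0 int) None = int CARD('v) + 1"
  "Poly_Mapping.lookup (c1e :: ('v::finite) option \<Rightarrow>\<^sub>0 int) (Some x) = 1"
  by (simp_all add: c1e_def)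

lemma lk_c2e: "Poly_Mapping.lookup (c2e K2 :: ('v::finite) option \<Rightarrow>\<^sub>0 int) None = int CARD('v) * int (card K2) + 1"
  "Poly_Mapping.lookup (c2e K2 :: ('v::finite) option \<Rightarrow>\<^sub>0 int) (Some x) = (if x \<in> K2 then int CARD('v) else 1)"
  by (simp_all add: c2e_def)

lemma c1_strict:
  defines "f \<equiv> restr_ratio (c1e :: ('v::finite) option \<Rightarrow>\<^sub>0 int)"
  shows "\<forall>x. 0 < f x \<and> f x < 1" "\<forall>K. (\<Sum>x\<in>K. f x) < 1"
    "\<forall>C. is_odd_cycle E C \<longrightarrow> (\<Sum>x\<in>C. f x) < (real (card C) - 1) / 2"
proof -
  define N where "N = real CARD('v) + 1"
  have N: "N \<ge> 2" unfolding N_def by simp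
  have fx: "f x = 1 / N" for x unfolding f_def restr_ratio_def lk_c1e N_def by simp
  show "\<forall>x. 0 < f x \<and> f x < 1" using N fx by simp
  have sK: "(\<Sum>x\<in>K. f x) < 1" for K
  proof -
    have "card K \<le> CARD('v)" by (rule card_mono) auto
    then have "real (card K) < N" unfolding N_def by simp
    then show ?thesis using N by (simp add: fx divide_less_eq)
  qed
  show "\<forall>K. (\<Sum>x\<in>K. f x) < 1" using sK by blast
  show "\<forall>C. is_odd_cycle E C \<longrightarrow> (\<Sum>x\<in>C. f x) < (real (card C) - 1) / 2"
  proof (intro allI impI)
    fix C assume "is_odd_cycle E C"
    then have "3 \<le> card C" using odd_cycle_props by blast
    then have "1 \<le> (real (card C) - 1) / 2" by simp
    then show "(\<Sum>x\<in>C. f x) < (real (card C) - 1) / 2" using sK[of C] by linarith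
  qed
qed

lemma c2_strict:
  fixes K2 :: "'v::finite set"
  defines "f \<equiv> restr_ratio (c2e K2)"
  assumes ne: "K2 \<noteq> {}"
  shows "\<forall>x. 0 < f x \<and> f x < 1"
    "\<And>K. (K2 \<subseteq> K \<Longrightarrow> K = K2) \<Longrightarrow> (\<Sum>x\<in>K. f x) < 1"
    "\<And>C. is_odd_cycle E C \<Longrightarrow> (card C = 3 \<Longrightarrow> K2 \<subseteq> C \<Longrightarrow> C = K2) \<Longrightarrow> (\<Sum>x\<in>C. f x) < (real (card C) - 1) / 2"
proof -
  define M where "M = int CARD('v)"
  define D where "D = real_of_int (M * int (card K2) + 1)"
  define w where "w = (\<lambda>x. if x \<in> K2 then M else 1)"
  have k1: "card K2 \<ge> 1" using ne by (simp add: Suc_le_eq card_gt_0_iff)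
  have M1: "M \<ge> 1" unfolding M_def by simp
  have k1': "int (card K2) \<ge> 1" using k1 by simp
  have "1 * 1 \<le> M * int (card K2)" using M1 k1' by (intro mult_mono) auto
  then have Mk: "M * int (card K2) \<ge> 1" by simp
  have Mk': "real_of_int (M * int (card K2)) \<ge> 1" using Mk by (metis of_int_1 of_int_le_iff)
  have D: "D > 1" unfolding D_def of_int_add of_int_1 using Mk' by linarith
  have fx: "f x = real_of_int (w x) / D" for x
    unfolding f_def restr_ratio_def lk_c2e D_def w_def M_def by simp
  have sum_f: "(\<Sum>x\<in>K. f x) = real_of_int (\<Sum>x\<in>K. w x) / D" for K
    by (simp add: fx sum_divide_distrib)
  show "\<forall>x. 0 < f x \<and> f x < 1"
  proof
    fix x
    have "1 \<le> w x" "w x \<le> M * int (card K2)" unfolding w_def using M1 k1' Mk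
      by (auto simp: mult_le_cancel_left1)
    then have "1 \<le> real_of_int (w x)" "real_of_int (w x) < real_of_int (M * int (card K2) + 1)"
    proof -
      assume a: "1 \<le> w x" "w x \<le> M * int (card K2)"
      show "1 \<le> real_of_int (w x)" using a(1) by (metis of_int_1 of_int_le_iff)
      have "w x < M * int (card K2) + 1" using a(2) by linarith
      then show "real_of_int (w x) < real_of_int (M * int (card K2) + 1)" by (simp only: of_int_less_iff)
    qed
    then have "0 < real_of_int (w x)" "real_of_int (w x) < D" unfolding D_def by linarith+
    then show "0 < f x \<and> f x < 1" using D unfolding fx by (simp add: pos_divide_less_eq)
  qed
  show "(\<Sum>x\<in>K. f x) < 1" if "K2 \<subseteq> K \<Longrightarrow> K = K2" for K
  proof -
    have "(\<Sum>x\<in>K. w x) \<le> M * int (card K2)" unfolding w_def M_def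
      by (rule c2_clique_bound[OF that ne])
    then have "(\<Sum>x\<in>K. w x) < M * int (card K2) + 1" by linarith
    then have "real_of_int (\<Sum>x\<in>K. w x) < real_of_int (M * int (card K2) + 1)"
      by (simp only: of_int_less_iff)
    then have "real_of_int (\<Sum>x\<in>K. w x) < D" unfolding D_def .
    then show ?thesis using D unfolding sum_f by (simp add: pos_divide_less_eq)
  qed
  show "(\<Sum>x\<in>C. f x) < (real (card C) - 1) / 2"
    if C: "is_odd_cycle E C" and m: "card C = 3 \<Longrightarrow> K2 \<subseteq> C \<Longrightarrow> C = K2" for C
  proof -
    have "2 * (\<Sum>x\<in>C. w x) < (int (card C) - 1) * (M * int (card K2) + 1)"
      unfolding w_def M_def by (rule c2_cycle_bound[OF C m ne])
    then have "real_of_int (2 * (\<Sum>x\<in>C. w x)) < real_of_int ((int (card C) - 1) * (M * int (card K2) + 1))"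
      by (simp only: of_int_less_iff)
    then have S: "2 * real_of_int (\<Sum>x\<in>C. w x) < (real (card C) - 1) * D"
      unfolding D_def of_int_mult of_int_diff of_int_of_nat_eq of_int_1 of_int_numeral .
    have D0: "0 < D" using D by simp
    have e: "(real (card C) - 1) / 2 * D = ((real (card C) - 1) * D) / 2" by simp
    have "real_of_int (\<Sum>x\<in>C. w x) / D < (real (card C) - 1) / 2"
      by (subst pos_divide_less_eq[OF D0]) (use S e in linarith)
    then show ?thesis by (simp only: sum_f)
  qed
qed

lemma hstab_case:
  fixes E :: "'v::finite \<Rightarrow> 'v \<Rightarrow> bool"
  assumes sg: "simple_graph E" and K1: "is_maximal_clique E K1" and K2: "is_maximal_clique E K2"
  shows "module_trace (ehrhart_ring (HSTAB E) :: (('v option \<Rightarrow>\<^sub>0 int) \<Rightarrow>\<^sub>0 'k::field) set)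
                   (ehrhart_canonical (HSTAB E))
      \<subseteq> degree_ge (ehrhart_ring (HSTAB E)) (int (card K1) - int (card K2))"
proof -
  have ne: "K2 \<noteq> {}" using max_clique_ne K2 by blast
  have sub: "g \<in> HSTAB E" if "\<forall>x. 0 \<le> g x \<and> g x \<le> 1" "\<forall>K\<in>{K. is_clique E K}. (\<Sum>x\<in>K. g x) \<le> 1"
    "\<forall>C\<in>{C. is_odd_cycle E C}. (\<Sum>x\<in>C. g x) \<le> (real (card C) - 1) / 2" for g
    using that unfolding HSTAB_def by auto
  have i1: "restr_ratio (c1e :: 'v option \<Rightarrow>\<^sub>0 int) \<in> interior (HSTAB E)"
    by (rule interior_by_strict[where A="{K. is_clique E K}" and B="{C. is_odd_cycle E C}" and \<beta>="\<lambda>C. (real (card C) - 1) / 2"])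
       (use c1_strict[where 'v='v] sub in auto)
  have i2: "restr_ratio (c2e K2) \<in> interior (HSTAB E)"
  proof (rule interior_by_strict[where A="{K. is_clique E K}" and B="{C. is_odd_cycle E C}" and \<beta>="\<lambda>C. (real (card C) - 1) / 2"])
    show "\<forall>x. 0 < restr_ratio (c2e K2) x \<and> restr_ratio (c2e K2) x < 1" using c2_strict(1)[OF ne] .
    show "\<forall>K\<in>{K. is_clique E K}. (\<Sum>x\<in>K. restr_ratio (c2e K2) x) < 1"
      using c2_strict(2)[OF ne] K2 unfolding is_maximal_clique_def by auto
    show "\<forall>C\<in>{C. is_odd_cycle E C}. (\<Sum>x\<in>C. restr_ratio (c2e K2) x) < (real (card C) - 1) / 2"
    proof
      fix C assume "C \<in> {C. is_odd_cycle E C}"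
      then have C: "is_odd_cycle E C" by simp
      have "C = K2" if "card C = 3" "K2 \<subseteq> C"
        using odd_cycle3_clique[OF sg C that(1)] that(2) K2 unfolding is_maximal_clique_def by auto
      then show "(\<Sum>x\<in>C. restr_ratio (c2e K2) x) < (real (card C) - 1) / 2"
        using c2_strict(3)[OF ne C] by blast
    qed
  qed (rule sub)
  show ?thesis
  proof (rule core[where ca=c1e and cb="c2e K2"])
    show "0 \<le> f x" if "f \<in> HSTAB E" for f x using that unfolding HSTAB_def by auto
    show "(\<Sum>x\<in>K2. f x) \<le> 1" if "f \<in> HSTAB E" for f
      using that K2 unfolding HSTAB_def is_maximal_clique_def by auto
    show "(\<Sum>x\<in>K1. f x) \<le> 1" if "f \<in> HSTAB E" for f
      using that K1 unfolding HSTAB_def is_maximal_clique_def by auto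
  qed (use i1 i2 in \<open>simp_all add: lk_c1e lk_c2e\<close>)
qed

lemma qstab_case:
  fixes E :: "'v::finite \<Rightarrow> 'v \<Rightarrow> bool"
  assumes sg: "simple_graph E" and K1: "is_maximal_clique E K1" and K2: "is_maximal_clique E K2"
  shows "module_trace (ehrhart_ring (QSTAB E) :: (('v option \<Rightarrow>\<^sub>0 int) \<Rightarrow>\<^sub>0 'k::field) set)
                   (ehrhart_canonical (QSTAB E))
      \<subseteq> degree_ge (ehrhart_ring (QSTAB E)) (int (card K1) - int (card K2))"
proof -
  have ne: "K2 \<noteq> {}" using max_clique_ne K2 by blast
  have sub: "g \<in> QSTAB E" if "\<forall>x. 0 \<le> g x \<and> g x \<le> 1" "\<forall>K\<in>{K. is_clique E K}. (\<Sum>x\<in>K. g x) \<le> 1"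
    "\<forall>C\<in>{}. (\<Sum>x\<in>C. g x) \<le> \<beta> C" for g and \<beta> :: "'v set \<Rightarrow> real"
    using that unfolding QSTAB_def by auto
  have i1: "restr_ratio (c1e :: 'v option \<Rightarrow>\<^sub>0 int) \<in> interior (QSTAB E)"
    by (rule interior_by_strict[where A="{K. is_clique E K}" and B="{}" and \<beta>="\<lambda>_. 0"])
       (use c1_strict[where 'v='v] sub in auto)
  have i2: "restr_ratio (c2e K2) \<in> interior (QSTAB E)"
  proof (rule interior_by_strict[where A="{K. is_clique E K}" and B="{}" and \<beta>="\<lambda>_. 0"])
    show "\<forall>x. 0 < restr_ratio (c2e K2) x \<and> restr_ratio (c2e K2) x < 1" using c2_strict(1)[OF ne] .
    show "\<forall>K\<in>{K. is_clique E K}. (\<Sum>x\<in>K. restr_ratio (c2e K2) x) < 1"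
      using c2_strict(2)[OF ne] K2 unfolding is_maximal_clique_def by auto
  qed (use sub in auto)
  show ?thesis
  proof (rule core[where ca=c1e and cb="c2e K2"])
    show "0 \<le> f x" if "f \<in> QSTAB E" for f x using that unfolding QSTAB_def by auto
    show "(\<Sum>x\<in>K2. f x) \<le> 1" if "f \<in> QSTAB E" for f
      using that K2 unfolding QSTAB_def is_maximal_clique_def by auto
    show "(\<Sum>x\<in>K1. f x) \<le> 1" if "f \<in> QSTAB E" for f
      using that K1 unfolding QSTAB_def is_maximal_clique_def by auto
  qed (use i1 i2 in \<open>simp_all add: lk_c1e lk_c2e\<close>)
qed

lemma tstab_case:
  fixes E :: "'v::finite \<Rightarrow> 'v \<Rightarrow> bool"
  assumes sg: "simple_graph E" and K1: "is_maximal_small_clique E K1" and K2: "is_maximal_small_clique E K2"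
  shows "module_trace (ehrhart_ring (TSTAB E) :: (('v option \<Rightarrow>\<^sub>0 int) \<Rightarrow>\<^sub>0 'k::field) set)
                   (ehrhart_canonical (TSTAB E))
      \<subseteq> degree_ge (ehrhart_ring (TSTAB E)) (int (card K1) - int (card K2))"
proof -
  have ne: "K2 \<noteq> {}" using max_small_clique_ne K2 by blast
  have irr: "E x y \<Longrightarrow> x \<noteq> y" for x y using sg unfolding simple_graph_def by auto
  have sym: "E x y \<Longrightarrow> E y x" for x y using sg unfolding simple_graph_def by auto
  let ?A = "{{x,y} | x y. E x y}"
  have sub: "g \<in> TSTAB E" if "\<forall>x. 0 \<le> g x \<and> g x \<le> 1" "\<forall>K\<in>?A. (\<Sum>x\<in>K. g x) \<le> 1"
    "\<forall>C\<in>{C. is_odd_cycle E C}. (\<Sum>x\<in>C. g x) \<le> (real (card C) - 1) / 2" for g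
  proof -
    have "g x + g y \<le> 1" if "E x y" for x y
    proof -
      have "(\<Sum>z\<in>{x,y}. g z) \<le> 1" using that \<open>\<forall>K\<in>?A. (\<Sum>x\<in>K. g x) \<le> 1\<close> by blast
      then show ?thesis using irr[OF that] by simp
    qed
    then show ?thesis using that unfolding TSTAB_def by auto
  qed
  have edge_small: "{x,y} \<in> small_cliques E" if "E x y" for x y
  proof -
    have "card {x,y} \<le> 3" by (rule order_trans[OF card_insert_le_m1]) auto
    moreover have "is_clique E {x,y}" using that sym unfolding is_clique_def by auto
    ultimately show ?thesis unfolding small_cliques_def by simp
  qed
  have i1: "restr_ratio (c1e :: 'v option \<Rightarrow>\<^sub>0 int) \<in> interior (TSTAB E)"
    by (rule interior_by_strict[where A="?A" and B="{C. is_odd_cycle E C}" and \<beta>="\<lambda>C. (real (card C) - 1) / 2"])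
       (use c1_strict[where 'v='v] sub in auto)
  have i2: "restr_ratio (c2e K2) \<in> interior (TSTAB E)"
  proof (rule interior_by_strict[where A="?A" and B="{C. is_odd_cycle E C}" and \<beta>="\<lambda>C. (real (card C) - 1) / 2"])
    show "\<forall>x. 0 < restr_ratio (c2e K2) x \<and> restr_ratio (c2e K2) x < 1" using c2_strict(1)[OF ne] .
    show "\<forall>K\<in>?A. (\<Sum>x\<in>K. restr_ratio (c2e K2) x) < 1"
    proof
      fix K assume "K \<in> ?A"
      then obtain x y where K: "K = {x,y}" "E x y" by blast
      have "K2 \<subseteq> K \<Longrightarrow> K = K2" using edge_small[OF K(2)] K(1) K2
        unfolding is_maximal_small_clique_def by auto
      then show "(\<Sum>x\<in>K. restr_ratio (c2e K2) x) < 1" using c2_strict(2)[OF ne] by blast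
    qed
    show "\<forall>C\<in>{C. is_odd_cycle E C}. (\<Sum>x\<in>C. restr_ratio (c2e K2) x) < (real (card C) - 1) / 2"
    proof
      fix C assume "C \<in> {C. is_odd_cycle E C}"
      then have C: "is_odd_cycle E C" by simp
      have "C = K2" if "card C = 3" "K2 \<subseteq> C"
      proof -
        have "C \<in> small_cliques E" using odd_cycle3_clique[OF sg C that(1)] that(1)
          unfolding small_cliques_def by simp
        then show ?thesis using that(2) K2 unfolding is_maximal_small_clique_def by auto
      qed
      then show "(\<Sum>x\<in>C. restr_ratio (c2e K2) x) < (real (card C) - 1) / 2"
        using c2_strict(3)[OF ne C] by blast
    qed
  qed (rule sub)
  have K1c: "is_clique E K1" "card K1 \<le> 3" and K2c: "is_clique E K2" "card K2 \<le> 3"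
    using K1 K2 unfolding is_maximal_small_clique_def small_cliques_def by auto
  show ?thesis
  proof (rule core[where ca=c1e and cb="c2e K2"])
    show "0 \<le> f x" if "f \<in> TSTAB E" for f x using that unfolding TSTAB_def by auto
    show "(\<Sum>x\<in>K2. f x) \<le> 1" if "f \<in> TSTAB E" for f using tstab_small[OF sg that K2c] .
    show "(\<Sum>x\<in>K1. f x) \<le> 1" if "f \<in> TSTAB E" for f using tstab_small[OF sg that K1c] .
  qed (use i1 i2 in \<open>simp_all add: lk_c1e lk_c2e\<close>)
qed

theorem lemma4p1:
  fixes E :: "'v::finite \<Rightarrow> 'v \<Rightarrow> bool"
  assumes "simple_graph E"
  shows
  "(\<forall>K1 K2. is_maximal_clique E K1 \<and> is_maximal_clique E K2 \<and> card K2 < card K1 \<longrightarrow>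
      module_trace (ehrhart_ring (HSTAB E) :: (('v option \<Rightarrow>\<^sub>0 int) \<Rightarrow>\<^sub>0 'k::field) set)
                   (ehrhart_canonical (HSTAB E))
      \<subseteq> degree_ge (ehrhart_ring (HSTAB E)) (int (card K1) - int (card K2)))
   \<and> (\<forall>K1 K2. is_maximal_clique E K1 \<and> is_maximal_clique E K2 \<and> card K2 < card K1 \<longrightarrow>
      module_trace (ehrhart_ring (QSTAB E) :: (('v option \<Rightarrow>\<^sub>0 int) \<Rightarrow>\<^sub>0 'k) set)
                   (ehrhart_canonical (QSTAB E))
      \<subseteq> degree_ge (ehrhart_ring (QSTAB E)) (int (card K1) - int (card K2)))
   \<and> (\<forall>K1 K2. is_maximal_small_clique E K1 \<and> is_maximal_small_clique E K2 \<and> card K2 < card K1 \<longrightarrow>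
      module_trace (ehrhart_ring (TSTAB E) :: (('v option \<Rightarrow>\<^sub>0 int) \<Rightarrow>\<^sub>0 'k) set)
                   (ehrhart_canonical (TSTAB E))
      \<subseteq> degree_ge (ehrhart_ring (TSTAB E)) (int (card K1) - int (card K2)))"
  using hstab_case[OF assms] qstab_case[OF assms] tstab_case[OF assms] by blast

end
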